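(* Let $n\ge2$, $t\in\mathbb{Z}_{\ge0}$ and $\bm{N}=(t,0,\ldots,0,-t)\in\mathbb{Z}^{n+1}$. Then $|\mathcal{S}^+_n(\bm{N})|=J_{n-1,t}$. In particular, for $t\ge\binom{n-1}{2}$, $|\mathcal{S}^+_n(\bm{N})|=(n-1)!$.
   Context: For $\bm{M}=(M_0,\ldots,M_n)\in\mathbb{Z}^{n+1}$ with zero sum, $K_n(\bm{M})$ is the number of integer vectors $(f_{ij})_{0\le i<j\le n}\in\mathbb{Z}_{\ge0}^{\binom{n+1}{2}}$ with $\sum_{j>i} f_{ij}-\sum_{k<i} f_{ki}=M_i$ for all $i$. Let $\bm\delta=(n-1,\ldots,1,0)$; for a weak composition $\bm{j}=(j_0,\ldots,j_{n-1})$ of $\binom n2$, $K_n(\bm{j}-\bm\delta):=K_n(j_0-(n-1),\ldots,j_{n-1}-0,0)$. $\mathcal{S}^+_n(\bm{N})$ is the set of weak compositions $\bm{j}$ of $\binom n2$ with $\binom{N_0+n-1}{j_0}\binom{N_1+n-2}{j_1}\cdots\binom{N_{n-1}}{j_{n-1}}K_n(\bm{j}-\bm\delta)>0$. $J_{m,k}$ is the number of permutations of $\{1,\ldots,m\}$ with at most $k$ inversions. *)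

theory Defs
  imports Complex_Main "HOL-Combinatorics.Permutations"
begin

definition kostant_flows :: "nat \<Rightarrow> (nat \<Rightarrow> int) \<Rightarrow> (nat \<Rightarrow> nat \<Rightarrow> nat) set" where
  "kostant_flows n M = {f. (\<forall>i j. \<not> (i < j \<and> j \<le> n) \<longrightarrow> f i j = 0) \<and>
      (\<forall>i \<le> n. (\<Sum>j\<in>{i<..n}. int (f i j)) - (\<Sum>k<i. int (f k i)) = M i)}"

definition K :: "nat \<Rightarrow> (nat \<Rightarrow> int) \<Rightarrow> nat" where
  "K n M = card (kostant_flows n M)"

definition j_minus_delta :: "nat \<Rightarrow> (nat \<Rightarrow> nat) \<Rightarrow> nat \<Rightarrow> int" where
  "j_minus_delta n j = (\<lambda>i. if i < n then int (j i) - int (n - 1 - i) else 0)"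

definition weak_compositions :: "nat \<Rightarrow> nat \<Rightarrow> (nat \<Rightarrow> nat) set" where
  "weak_compositions n m = {j. (\<forall>i\<ge>n. j i = 0) \<and> (\<Sum>i<n. j i) = m}"

text \<open>S^+_n(N): binomial coefficients with integer top use the generalized binomial.\<close>
definition Splus :: "nat \<Rightarrow> (nat \<Rightarrow> int) \<Rightarrow> (nat \<Rightarrow> nat) set" where
  "Splus n N = {j \<in> weak_compositions n (n choose 2).
      (\<Prod>i<n. (of_int (N i + int (n - 1 - i)) :: real) gchoose (j i))
        * real (K n (j_minus_delta n j)) > 0}"

definition inversions :: "nat \<Rightarrow> (nat \<Rightarrow> nat) \<Rightarrow> nat" where
  "inversions m p = card {(a, b). a \<in> {1..m} \<and> b \<in> {1..m} \<and> a < b \<and> p a > p b}"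

definition J :: "nat \<Rightarrow> nat \<Rightarrow> nat" where
  "J m k = card {p. p permutes {1..m} \<and> inversions m p \<le> k}"

end

theory Submission
  imports Defs
begin


definition code :: "nat \<Rightarrow> (nat \<Rightarrow> nat) \<Rightarrow> nat \<Rightarrow> nat" where
  "code m p a = card {b \<in> {1..m}. a < b \<and> p b < p a}"
definition lehmer :: "nat \<Rightarrow> (nat \<Rightarrow> nat) \<Rightarrow> nat \<Rightarrow> nat" where
  "lehmer m p = restrict (code m p) {1..m}"
definition Box :: "nat \<Rightarrow> (nat \<Rightarrow> nat) set" where
  "Box m = PiE {1..m} (\<lambda>a. {0..m-a})"

lemma code_le: "code m p a \<le> m - a"
proof -
  have "code m p a \<le> card {a<..m}" unfolding code_def by (rule card_mono) auto
  thus ?thesis by simp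
qed

lemma inversions_eq: "inversions m p = (\<Sum>a\<in>{1..m}. code m p a)"
proof -
  have "{(a, b). a \<in> {1..m} \<and> b \<in> {1..m} \<and> a < b \<and> p a > p b}
     = Sigma {1..m} (\<lambda>a. {b \<in> {1..m}. a < b \<and> p b < p a})" by auto
  thus ?thesis unfolding inversions_def code_def by simp
qed

lemma code_eq:
  assumes "p permutes {1..m}" "a \<in> {1..m}"
  shows "code m p a = card {x \<in> p ` {a..m}. x < p a}"
proof -
  have "{x \<in> p ` {a..m}. x < p a} = p ` {b \<in> {1..m}. a < b \<and> p b < p a}"
    using assms(2) apply (auto simp: image_iff)
    subgoal for xa by (rule exI[of _ xa]) (auto simp: le_less)
    done
  moreover have "inj_on p {b \<in> {1..m}. a < b \<and> p b < p a}"
    using permutes_inj[OF assms(1)] by (auto intro: inj_on_subset)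
  ultimately show ?thesis unfolding code_def by (simp add: card_image)
qed

lemma image_tail:
  fixes m a :: nat
  assumes "p permutes {1..m}" "1 \<le> a"
  shows "p ` {a..m} = {1..m} - p ` {1..<a}"
proof -
  have inj: "inj p" using permutes_inj[OF assms(1)] .
  have im: "p ` {1..m} = {1..m}" using permutes_image[OF assms(1)] .
  have out: "\<And>x. x \<notin> {1..m} \<Longrightarrow> p x = x" using permutes_not_in[OF assms(1)] by blast
  show ?thesis
  proof
    show "p ` {a..m} \<subseteq> {1..m} - p ` {1..<a}"
    proof
      fix x assume "x \<in> p ` {a..m}"
      then obtain y where y: "y \<in> {a..m}" "x = p y" by auto
      have "y \<in> {1..m}" using y assms(2) by auto
      hence "x \<in> {1..m}" using im y by blast
      moreover have "x \<notin> p ` {1..<a}" using y inj by (auto dest: injD)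
      ultimately show "x \<in> {1..m} - p ` {1..<a}" by blast
    qed
    show "{1..m} - p ` {1..<a} \<subseteq> p ` {a..m}"
    proof
      fix x assume x: "x \<in> {1..m} - p ` {1..<a}"
      then obtain y where y: "y \<in> {1..m}" "x = p y" using im by (metis DiffD1 imageE)
      have "y \<notin> {1..<a}" using x y by auto
      hence "y \<in> {a..m}" using y by auto
      thus "x \<in> p ` {a..m}" using y by auto
    qed
  qed
qed

lemma lehmer_inj: "inj_on (lehmer m) {p. p permutes {1..m}}"
proof (rule inj_onI)
  fix p q assume p: "p \<in> {p. p permutes {1..m}}" and q: "q \<in> {p. p permutes {1..m}}"
    and eq: "lehmer m p = lehmer m q"
  from p q have p: "p permutes {1..m}" and q: "q permutes {1..m}" by auto
  show "p = q"
  proof (rule ccontr)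
    assume "p \<noteq> q"
    then obtain a0 where "p a0 \<noteq> q a0" by auto
    define a where "a = (LEAST a. p a \<noteq> q a)"
    have pa: "p a \<noteq> q a" unfolding a_def by (rule LeastI) fact
    have less: "\<And>b. b < a \<Longrightarrow> p b = q b" unfolding a_def using not_less_Least by blast
    have aS: "a \<in> {1..m}"
    proof (rule ccontr)
      assume "a \<notin> {1..m}"
      hence "p a = a" "q a = a" using permutes_not_in p q by metis+
      with pa show False by simp
    qed
    have "p ` {1..<a} = q ` {1..<a}" using less by auto
    hence S: "p ` {a..m} = q ` {a..m}" using image_tail[OF p] image_tail[OF q] aS by auto
    have "code m p a = code m q a" using eq aS unfolding lehmer_def
      by (metis restrict_apply')
    hence ceq: "card {x \<in> p ` {a..m}. x < p a} = card {x \<in> p ` {a..m}. x < q a}"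
      using code_eq[OF p aS] code_eq[OF q aS] S by simp
    have paS: "p a \<in> p ` {a..m}" and qaS: "q a \<in> p ` {a..m}" using aS S by auto
    show False
    proof (cases "p a < q a")
      case True
      have "{x \<in> p ` {a..m}. x < p a} \<subset> {x \<in> p ` {a..m}. x < q a}"
        using True paS by auto
      hence "card {x \<in> p ` {a..m}. x < p a} < card {x \<in> p ` {a..m}. x < q a}"
        by (intro psubset_card_mono) auto
      with ceq show False by simp
    next
      case False
      hence F: "q a < p a" using pa by simp
      have "{x \<in> p ` {a..m}. x < q a} \<subset> {x \<in> p ` {a..m}. x < p a}"
        using F qaS by auto
      hence "card {x \<in> p ` {a..m}. x < q a} < card {x \<in> p ` {a..m}. x < p a}"
        by (intro psubset_card_mono) auto
      with ceq show False by simp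
    qed
  qed
qed

lemma prod_fact: "(\<Prod>a\<in>{1..m}. Suc (m - a)) = fact m"
proof (induction m)
  case 0 then show ?case by simp
next
  case (Suc m)
  have "{1..Suc m} = insert 1 {Suc 1..Suc m}" by auto
  hence "(\<Prod>a\<in>{1..Suc m}. Suc (Suc m - a)) = Suc m * (\<Prod>a\<in>{Suc 1..Suc m}. Suc (Suc m - a))"
    by simp
  also have "(\<Prod>a\<in>{Suc 1..Suc m}. Suc (Suc m - a)) = (\<Prod>a\<in>{1..m}. Suc (m - a))"
    by (subst prod.shift_bounds_cl_Suc_ivl) simp
  finally show ?case using Suc by (simp add: fact_Suc)
qed

lemma card_Box: "card (Box m) = fact m"
  unfolding Box_def using prod_fact[of m] by (simp add: card_PiE)

lemma finite_Box: "finite (Box m)"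
  unfolding Box_def by (intro finite_PiE) auto

lemma lehmer_Box: "lehmer m p \<in> Box m"
  unfolding lehmer_def Box_def restrict_PiE_iff using code_le by auto

lemma lehmer_bij: "bij_betw (lehmer m) {p. p permutes {1..m}} (Box m)"
proof -
  have sub: "lehmer m ` {p. p permutes {1..m}} \<subseteq> Box m" using lehmer_Box by auto
  have "card (lehmer m ` {p. p permutes {1..m}}) = fact m"
    using card_image[OF lehmer_inj] card_permutations[of "{1..m}" m] by simp
  hence "lehmer m ` {p. p permutes {1..m}} = Box m"
    using card_subset_eq[OF finite_Box sub] card_Box by simp
  thus ?thesis using lehmer_inj bij_betw_def by blast
qed

lemma J_Box: "J m k = card {c \<in> Box m. (\<Sum>a\<in>{1..m}. c a) \<le> k}"
proof -
  have sl: "(\<Sum>a\<in>{1..m}. lehmer m p a) = inversions m p" for p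
    unfolding inversions_eq lehmer_def by simp
  have "{c \<in> Box m. (\<Sum>a\<in>{1..m}. c a) \<le> k} = lehmer m ` {p. p permutes {1..m} \<and> inversions m p \<le> k}"
  proof
    show "lehmer m ` {p. p permutes {1..m} \<and> inversions m p \<le> k} \<subseteq> {c \<in> Box m. (\<Sum>a\<in>{1..m}. c a) \<le> k}"
      using lehmer_Box sl by auto
    show "{c \<in> Box m. (\<Sum>a\<in>{1..m}. c a) \<le> k} \<subseteq> lehmer m ` {p. p permutes {1..m} \<and> inversions m p \<le> k}"
    proof
      fix c assume c: "c \<in> {c \<in> Box m. (\<Sum>a\<in>{1..m}. c a) \<le> k}"
      then obtain p where "p permutes {1..m}" "c = lehmer m p"
        using lehmer_bij unfolding bij_betw_def by (metis (no_types, lifting) imageE mem_Collect_eq)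
      thus "c \<in> lehmer m ` {p. p permutes {1..m} \<and> inversions m p \<le> k}" using c sl by auto
    qed
  qed
  moreover have "inj_on (lehmer m) {p. p permutes {1..m} \<and> inversions m p \<le> k}"
    by (rule inj_on_subset[OF lehmer_inj]) auto
  ultimately show ?thesis unfolding J_def by (simp add: card_image)
qed


lemma flow_potential:
  assumes f: "f \<in> kostant_flows n M"
  shows "(\<Sum>k<n. \<Sum>b\<in>{Suc k..n}. int (b - k) * int (f k b)) = - (\<Sum>i\<le>n. int i * M i)"
proof -
  have M: "M i = (\<Sum>b\<in>{Suc i..n}. int (f i b)) - (\<Sum>k<i. int (f k i))" if "i \<le> n" for i
    using f that unfolding kostant_flows_def by (auto simp: atLeastSucAtMost_greaterThanAtMost[symmetric])
  have "(\<Sum>i\<le>n. int i * M i) = (\<Sum>i\<le>n. \<Sum>b\<in>{Suc i..n}. int i * int (f i b)) - (\<Sum>i\<le>n. \<Sum>k<i. int i * int (f k i))"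
    by (simp add: M right_diff_distrib sum_distrib_left sum_subtractf)
  also have "(\<Sum>i\<le>n. \<Sum>b\<in>{Suc i..n}. int i * int (f i b)) = (\<Sum>i<n. \<Sum>b\<in>{Suc i..n}. int i * int (f i b))"
    by (simp add: lessThan_Suc_atMost[symmetric])
  also have "(\<Sum>i\<le>n. \<Sum>k<i. int i * int (f k i)) = (\<Sum>k<n. \<Sum>i\<in>{Suc k..n}. int i * int (f k i))"
    by (rule sum.nested_swap')
  finally have "(\<Sum>i\<le>n. int i * M i) = (\<Sum>k<n. \<Sum>b\<in>{Suc k..n}. (int k - int b) * int (f k b))"
    by (simp add: left_diff_distrib sum_subtractf)
  also have "\<dots> = - (\<Sum>k<n. \<Sum>b\<in>{Suc k..n}. int (b - k) * int (f k b))"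
    by (simp add: sum_negf[symmetric] of_nat_diff left_diff_distrib)
  finally show ?thesis by simp
qed

lemma flow_bound:
  assumes f: "f \<in> kostant_flows n M"
  shows "f a b \<le> nat (- (\<Sum>i\<le>n. int i * M i))"
proof (cases "a < b \<and> b \<le> n")
  case False
  then show ?thesis using f unfolding kostant_flows_def by auto
next
  case True
  have nn: "\<And>k b. 0 \<le> int (b - k) * int (f k b)" by simp
  have h: "f a b \<le> (b - a) * f a b" using True
    by (metis One_nat_def Suc_leI mult_le_mono1 mult_1 zero_less_diff)
  have "int (f a b) \<le> int (b - a) * int (f a b)" using h by (metis of_nat_le_iff of_nat_mult)
  also have "\<dots> \<le> (\<Sum>b\<in>{Suc a..n}. int (b - a) * int (f a b))"
    using True by (intro member_le_sum) auto
  also have "\<dots> \<le> (\<Sum>k<n. \<Sum>b\<in>{Suc k..n}. int (b - k) * int (f k b))"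
    using True by (intro member_le_sum sum_nonneg) auto
  finally show ?thesis using flow_potential[OF f] by simp
qed

lemma finite_flows: "finite (kostant_flows n M)"
proof -
  define B where "B = nat (- (\<Sum>i\<le>n. int i * M i))"
  define g where "g f = (\<lambda>(i,j)\<in>{..n}\<times>{..n}. (f i j::nat))" for f :: "nat \<Rightarrow> nat \<Rightarrow> nat"
  have "inj_on g (kostant_flows n M)"
  proof (rule inj_onI)
    fix f h assume f: "f \<in> kostant_flows n M" and h: "h \<in> kostant_flows n M" and e: "g f = g h"
    show "f = h"
    proof (intro ext)
      fix i j
      show "f i j = h i j"
      proof (cases "i < j \<and> j \<le> n")
        case True
        hence "g f (i,j) = g h (i,j)" using e by simp
        thus ?thesis using True unfolding g_def by simp
      next
        case False
        thus ?thesis using f h unfolding kostant_flows_def by auto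
      qed
    qed
  qed
  moreover have "g ` kostant_flows n M \<subseteq> PiE ({..n}\<times>{..n}) (\<lambda>_. {..B})"
  proof (rule image_subsetI)
    fix f assume "f \<in> kostant_flows n M"
    then show "g f \<in> PiE ({..n}\<times>{..n}) (\<lambda>_. {..B})"
      unfolding g_def by (subst restrict_PiE_iff) (auto simp: B_def flow_bound)
  qed
  moreover have "finite (PiE ({..n}\<times>{..n}) (\<lambda>_. {..B}))" by (intro finite_PiE) auto
  ultimately show ?thesis using inj_on_finite by blast
qed

lemma sumtri: "(\<Sum>a\<in>{1..m}. m - a) = m choose 2"
proof (induction m)
  case 0 then show ?case by simp
next
  case (Suc m)
  have "(\<Sum>a\<in>{1..Suc m}. Suc m - a) = (\<Sum>a\<in>{1..m}. Suc m - a)" by simp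
  also have "\<dots> = (\<Sum>a\<in>{1..m}. (m - a) + 1)" by (intro sum.cong) auto
  also have "\<dots> = (\<Sum>a\<in>{1..m}. m - a) + (\<Sum>a\<in>{1..m}. 1)" by (rule sum.distrib)
  also have "\<dots> = (m choose 2) + m" using Suc by simp
  also have "\<dots> = Suc m choose 2" by (simp add: numeral_2_eq_2)
  finally show ?case .
qed

lemma sum_split0: fixes n :: nat shows "1 \<le> n \<Longrightarrow> (\<Sum>i<n. g i) = g 0 + (\<Sum>i\<in>{1..n-1}. g i)"
proof -
  assume "1 \<le> n"
  hence "{..<n} = insert 0 {1..n-1}" by auto
  thus ?thesis by simp
qed

lemma sum_delta: "1 \<le> n \<Longrightarrow> (\<Sum>i<n. n - 1 - i) = n choose 2"
proof -
  assume n: "1 \<le> n"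
  then obtain m where m: "n = Suc m" by (cases n) auto
  have "(\<Sum>i<n. n - 1 - i) = m + (m choose 2)"
    using sum_split0[OF n, of "\<lambda>i. n - 1 - i"] sumtri[of m] m by simp
  thus ?thesis using m by (simp add: numeral_2_eq_2)
qed

lemma j0_eq:
  assumes n: "1 \<le> n" and s: "(\<Sum>i<n. j i) = n choose 2" and le: "\<forall>i\<in>{1..n-1}. j i \<le> n - 1 - i"
  shows "j 0 = (n - 1) + (\<Sum>a\<in>{1..n-1}. n - 1 - a - j a)"
proof -
  have "(\<Sum>a\<in>{1..n-1}. n - 1 - a) = (\<Sum>a\<in>{1..n-1}. (n - 1 - a - j a) + j a)"
  proof (intro sum.cong refl)
    fix a assume "a \<in> {1..n-1}" hence "j a \<le> n - 1 - a" using le by blast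
    thus "n - 1 - a = n - 1 - a - j a + j a" by simp
  qed
  also have "\<dots> = (\<Sum>a\<in>{1..n-1}. n - 1 - a - j a) + (\<Sum>a\<in>{1..n-1}. j a)" by (simp add: sum.distrib)
  finally have e1: "(\<Sum>a\<in>{1..n-1}. n - 1 - a) = (\<Sum>a\<in>{1..n-1}. n - 1 - a - j a) + (\<Sum>a\<in>{1..n-1}. j a)" .
  have e2: "(\<Sum>i<n. n - 1 - i) = (n - 1) + (\<Sum>a\<in>{1..n-1}. n - 1 - a)"
    using sum_split0[OF n, of "\<lambda>i. n - 1 - i"] by simp
  have e3: "(\<Sum>i<n. j i) = j 0 + (\<Sum>a\<in>{1..n-1}. j a)" using sum_split0[OF n] by simp
  show ?thesis using e1 e2 e3 s sum_delta[OF n] by linarith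
qed

lemma K_pos:
  assumes n: "1 \<le> n" and s: "(\<Sum>i<n. j i) = n choose 2" and le: "\<forall>i\<in>{1..n-1}. j i \<le> n - 1 - i"
  shows "K n (j_minus_delta n j) > 0"
proof -
  define f :: "nat \<Rightarrow> nat \<Rightarrow> nat" where "f a b = (if a = 0 then (if 1 \<le> b \<and> b < n then n - 1 - b - j b else 0) else 0)" for a b
  have j0: "j 0 = (n - 1) + (\<Sum>a\<in>{1..n-1}. n - 1 - a - j a)" by (rule j0_eq[OF n s le])
  have "f \<in> kostant_flows n (j_minus_delta n j)"
    unfolding kostant_flows_def
  proof (intro CollectI conjI allI impI)
    fix a b assume "\<not> (a < b \<and> b \<le> n)"
    thus "f a b = 0" unfolding f_def by auto
  next
    fix i assume i: "i \<le> n"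
    show "(\<Sum>b\<in>{i<..n}. int (f i b)) - (\<Sum>k<i. int (f k i)) = j_minus_delta n j i"
    proof (cases "i = 0")
      case True
      have "{0<..n} = insert n {1..n-1}" using n by auto
      moreover have "f 0 n = 0" by (simp add: f_def)
      ultimately have "(\<Sum>b\<in>{0<..n}. int (f 0 b)) = (\<Sum>b\<in>{1..n-1}. int (f 0 b))"
        using n by simp
      also have "(\<Sum>b\<in>{1..n-1}. int (f 0 b)) = (\<Sum>b\<in>{1..n-1}. int (n - 1 - b - j b))"
        by (intro sum.cong refl) (auto simp: f_def)
      also have "\<dots> = int (\<Sum>b\<in>{1..n-1}. n - 1 - b - j b)" by simp
      finally show ?thesis using True j0 n unfolding j_minus_delta_def by simp
    next
      case False
      have o: "(\<Sum>b\<in>{i<..n}. int (f i b)) = 0" using False unfolding f_def by simp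
      have "(\<Sum>k<i. int (f k i)) = (\<Sum>k<i. if k = 0 then int (if 1 \<le> i \<and> i < n then n - 1 - i - j i else 0) else 0)"
        unfolding f_def by (intro sum.cong) auto
      also have "\<dots> = int (if 1 \<le> i \<and> i < n then n - 1 - i - j i else 0)"
        using False by (simp add: sum.delta)
      finally have inn: "(\<Sum>k<i. int (f k i)) = int (if 1 \<le> i \<and> i < n then n - 1 - i - j i else 0)" .
      show ?thesis
      proof (cases "i < n")
        case True
        hence "j i \<le> n - 1 - i" using le False by auto
        thus ?thesis using o inn True False unfolding j_minus_delta_def by (simp add: of_nat_diff)
      next
        case False
        thus ?thesis using o inn unfolding j_minus_delta_def by simp
      qed
    qed
  qed
  hence "kostant_flows n (j_minus_delta n j) \<noteq> {}" by auto
  thus ?thesis unfolding K_def using finite_flows by (simp add: card_gt_0_iff)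
qed


definition Sp :: "nat \<Rightarrow> nat \<Rightarrow> (nat \<Rightarrow> nat) set" where
  "Sp n t = {j. (\<forall>i\<ge>n. j i = 0) \<and> (\<Sum>i<n. j i) = n choose 2 \<and> j 0 \<le> t + (n - 1)
      \<and> (\<forall>i\<in>{1..n-1}. j i \<le> n - 1 - i)}"

lemma Splus_eq:
  fixes n t :: nat and N :: "nat \<Rightarrow> int"
  assumes n: "n \<ge> 2"
    and N: "N = (\<lambda>i. if i = 0 then int t else if i = n then - int t else 0)"
  shows "Splus n N = Sp n t"
proof -
  define T where "T i = (if i = 0 then t + (n - 1) else n - 1 - i)" for i
  have fac: "(of_int (N i + int (n - 1 - i)) :: real) gchoose j i = real (T i choose j i)"
    if "i < n" for i j
  proof (cases "i = 0")
    case True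
    have "(of_int (N i + int (n - 1 - i)) :: real) = of_nat (t + (n - 1))" using True N by simp
    thus ?thesis using True by (simp add: T_def binomial_gbinomial)
  next
    case False
    have "(of_int (N i + int (n - 1 - i)) :: real) = of_nat (n - 1 - i)" using False N that by simp
    thus ?thesis using False by (simp add: T_def binomial_gbinomial)
  qed
  have prodeq: "(\<Prod>i<n. (of_int (N i + int (n - 1 - i)) :: real) gchoose (j i)) = real (\<Prod>i<n. T i choose j i)" for j
  proof -
    have "(\<Prod>i<n. (of_int (N i + int (n - 1 - i)) :: real) gchoose (j i)) = (\<Prod>i<n. real (T i choose j i))"
      by (intro prod.cong refl fac) auto
    thus ?thesis by (simp add: of_nat_prod)
  qed
  have mem: "j \<in> Splus n N \<longleftrightarrow> j \<in> weak_compositions n (n choose 2) \<and> (\<forall>i<n. j i \<le> T i) \<and> K n (j_minus_delta n j) > 0" for j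
  proof -
    have "(real (\<Prod>i<n. T i choose j i) * real (K n (j_minus_delta n j)) > 0) \<longleftrightarrow>
          ((\<Prod>i<n. T i choose j i) > 0 \<and> K n (j_minus_delta n j) > 0)"
      by (metis of_nat_0_less_iff of_nat_mult nat_0_less_mult_iff)
    also have "(\<Prod>i<n. T i choose j i) > 0 \<longleftrightarrow> (\<forall>i<n. j i \<le> T i)" by auto
    finally show ?thesis unfolding Splus_def prodeq by simp
  qed
  have Tc: "(\<forall>i<n. j i \<le> T i) \<longleftrightarrow> j 0 \<le> t + (n - 1) \<and> (\<forall>i\<in>{1..n-1}. j i \<le> n - 1 - i)" for j
  proof
    assume h: "\<forall>i<n. j i \<le> T i"
    have "j 0 \<le> T 0" using h n by simp
    moreover have "j i \<le> n - 1 - i" if "i \<in> {1..n-1}" for i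
    proof -
      have "i < n" "i \<noteq> 0" using that n by auto
      thus ?thesis using h unfolding T_def by auto
    qed
    ultimately show "j 0 \<le> t + (n - 1) \<and> (\<forall>i\<in>{1..n-1}. j i \<le> n - 1 - i)" unfolding T_def by simp
  next
    assume a: "j 0 \<le> t + (n - 1) \<and> (\<forall>i\<in>{1..n-1}. j i \<le> n - 1 - i)"
    show "\<forall>i<n. j i \<le> T i"
    proof (intro allI impI)
      fix i assume "i < n"
      thus "j i \<le> T i" using a unfolding T_def by (cases "i = 0") auto
    qed
  qed
  show ?thesis
  proof (intro set_eqI iffI)
    fix j assume "j \<in> Splus n N"
    hence a: "j \<in> weak_compositions n (n choose 2)" "\<forall>i<n. j i \<le> T i" using mem by blast+
    have b: "j 0 \<le> t + (n - 1) \<and> (\<forall>i\<in>{1..n-1}. j i \<le> n - 1 - i)" using a(2) Tc by blast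
    show "j \<in> Sp n t" using a(1) b unfolding Sp_def weak_compositions_def mem_Collect_eq by blast
  next
    fix j assume j: "j \<in> Sp n t"
    have "K n (j_minus_delta n j) > 0"
      using j n unfolding Sp_def by (intro K_pos) auto
    moreover have "j \<in> weak_compositions n (n choose 2)" using j unfolding Sp_def weak_compositions_def by blast
    moreover have "\<forall>i<n. j i \<le> T i" using j Tc unfolding Sp_def by blast
    ultimately show "j \<in> Splus n N" using mem by blast
  qed
qed

lemma card_Sp: "n \<ge> 1 \<Longrightarrow> card (Sp n t) = card {c \<in> Box (n - 1). (\<Sum>a\<in>{1..n-1}. c a) \<le> t}"
proof -
  assume n: "n \<ge> 1"
  define \<phi> where "\<phi> j = restrict (\<lambda>a. n - 1 - a - j a) {1..n-1}" for j :: "nat \<Rightarrow> nat"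
  define \<psi> where "\<psi> c = (\<lambda>i. if i = 0 then n - 1 + (\<Sum>a\<in>{1..n-1}. c a) else if i < n then n - 1 - i - c i else 0)"
    for c :: "nat \<Rightarrow> nat"
  have sumphi: "(\<Sum>a\<in>{1..n-1}. \<phi> j a) = (\<Sum>a\<in>{1..n-1}. n - 1 - a - j a)" for j
    unfolding \<phi>_def by simp
  show ?thesis
  proof (rule bij_betw_same_card[of \<phi>], rule bij_betw_byWitness[where f' = \<psi>])
    show "\<forall>j\<in>Sp n t. \<psi> (\<phi> j) = j"
    proof
      fix j assume j: "j \<in> Sp n t"
      have j0: "j 0 = (n - 1) + (\<Sum>a\<in>{1..n-1}. n - 1 - a - j a)"
        using j n unfolding Sp_def by (intro j0_eq) auto
      show "\<psi> (\<phi> j) = j"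
      proof
        fix i show "\<psi> (\<phi> j) i = j i"
        proof (cases "i = 0")
          case True thus ?thesis using j0 sumphi unfolding \<psi>_def by simp
        next
          case False
          show ?thesis
          proof (cases "i < n")
            case True
            hence "j i \<le> n - 1 - i" using j False unfolding Sp_def by auto
            moreover have "i \<in> {1..n-1}" using True False by auto
            ultimately show ?thesis using True False unfolding \<psi>_def \<phi>_def by simp
          next
            case F2: False
            thus ?thesis using j False unfolding \<psi>_def Sp_def by auto
          qed
        qed
      qed
    qed
  next
    show "\<forall>c\<in>{c \<in> Box (n - 1). (\<Sum>a\<in>{1..n-1}. c a) \<le> t}. \<phi> (\<psi> c) = c"
    proof
      fix c assume c: "c \<in> {c \<in> Box (n - 1). (\<Sum>a\<in>{1..n-1}. c a) \<le> t}"
      hence cb: "c \<in> PiE {1..n-1} (\<lambda>a. {0..n-1-a})" unfolding Box_def by auto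
      show "\<phi> (\<psi> c) = c"
      proof
        fix a show "\<phi> (\<psi> c) a = c a"
        proof (cases "a \<in> {1..n-1}")
          case True
          hence "c a \<le> n - 1 - a" using cb by auto
          thus ?thesis using True n unfolding \<phi>_def \<psi>_def by auto
        next
          case False
          thus ?thesis using cb unfolding \<phi>_def by (auto simp: PiE_def extensional_def)
        qed
      qed
    qed
  next
    show "\<phi> ` Sp n t \<subseteq> {c \<in> Box (n - 1). (\<Sum>a\<in>{1..n-1}. c a) \<le> t}"
    proof
      fix c assume "c \<in> \<phi> ` Sp n t"
      then obtain j where j: "j \<in> Sp n t" and c: "c = \<phi> j" by auto
      have j0: "j 0 = (n - 1) + (\<Sum>a\<in>{1..n-1}. n - 1 - a - j a)"
        using j n unfolding Sp_def by (intro j0_eq) auto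
      have "c \<in> Box (n - 1)" unfolding c \<phi>_def Box_def restrict_PiE_iff by auto
      moreover have "(\<Sum>a\<in>{1..n-1}. c a) \<le> t" using c sumphi j0 j unfolding Sp_def by auto
      ultimately show "c \<in> {c \<in> Box (n - 1). (\<Sum>a\<in>{1..n-1}. c a) \<le> t}" by simp
    qed
  next
    show "\<psi> ` {c \<in> Box (n - 1). (\<Sum>a\<in>{1..n-1}. c a) \<le> t} \<subseteq> Sp n t"
    proof
      fix j assume "j \<in> \<psi> ` {c \<in> Box (n - 1). (\<Sum>a\<in>{1..n-1}. c a) \<le> t}"
      then obtain c where c: "c \<in> Box (n - 1)" "(\<Sum>a\<in>{1..n-1}. c a) \<le> t" and j: "j = \<psi> c" by auto
      have cb: "\<forall>a\<in>{1..n-1}. c a \<le> n - 1 - a" using c(1) unfolding Box_def by auto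
      have "(\<Sum>a\<in>{1..n-1}. j a) = (\<Sum>a\<in>{1..n-1}. n - 1 - a - c a)"
        unfolding j \<psi>_def by (intro sum.cong refl) auto
      moreover have "(\<Sum>a\<in>{1..n-1}. n - 1 - a) = (\<Sum>a\<in>{1..n-1}. n - 1 - a - c a) + (\<Sum>a\<in>{1..n-1}. c a)"
      proof -
        have "(\<Sum>a\<in>{1..n-1}. n - 1 - a) = (\<Sum>a\<in>{1..n-1}. (n - 1 - a - c a) + c a)"
        proof (intro sum.cong refl)
          fix a assume "a \<in> {1..n-1}" hence "c a \<le> n - 1 - a" using cb by blast
          thus "n - 1 - a = n - 1 - a - c a + c a" by simp
        qed
        thus ?thesis by (simp add: sum.distrib)
      qed
      moreover have "(\<Sum>i<n. j i) = j 0 + (\<Sum>a\<in>{1..n-1}. j a)" using sum_split0[OF n] by simp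
      moreover have "(\<Sum>i<n. n - 1 - i) = (n - 1) + (\<Sum>a\<in>{1..n-1}. n - 1 - a)"
        using sum_split0[OF n, of "\<lambda>i. n - 1 - i"] by simp
      moreover have "j 0 = n - 1 + (\<Sum>a\<in>{1..n-1}. c a)" unfolding j \<psi>_def by simp
      ultimately have "(\<Sum>i<n. j i) = n choose 2" using sum_delta[OF n] by linarith
      moreover have "\<forall>i\<ge>n. j i = 0" unfolding j \<psi>_def using n by auto
      moreover have "j 0 \<le> t + (n - 1)" unfolding j \<psi>_def using c(2) by simp
      moreover have "\<forall>i\<in>{1..n-1}. j i \<le> n - 1 - i" unfolding j \<psi>_def by auto
      ultimately show "j \<in> Sp n t" unfolding Sp_def by blast
    qed
  qed
qed

theorem proposition6p5:
  fixes n t :: nat and N :: "nat \<Rightarrow> int"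
  assumes "n \<ge> 2"
    and "N = (\<lambda>i. if i = 0 then int t else if i = n then - int t else 0)"
  shows "card (Splus n N) = J (n - 1) t
         \<and> (t \<ge> (n - 1) choose 2 \<longrightarrow> card (Splus n N) = fact (n - 1))"
proof -
  have c1: "card (Splus n N) = J (n - 1) t"
    using Splus_eq[OF assms] card_Sp[of n t] J_Box[of "n - 1" t] assms(1) by simp
  have c2: "card (Splus n N) = fact (n - 1)" if t: "t \<ge> (n - 1) choose 2"
  proof -
    have "{c \<in> Box (n - 1). (\<Sum>a\<in>{1..n-1}. c a) \<le> t} = Box (n - 1)"
    proof (intro set_eqI iffI)
      fix c assume c: "c \<in> Box (n - 1)"
      have "(\<Sum>a\<in>{1..n-1}. c a) \<le> (\<Sum>a\<in>{1..n-1}. n - 1 - a)"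
        using c unfolding Box_def by (intro sum_mono) auto
      also have "\<dots> = (n - 1) choose 2" by (rule sumtri)
      finally show "c \<in> {c \<in> Box (n - 1). (\<Sum>a\<in>{1..n-1}. c a) \<le> t}" using c t by simp
    qed auto
    thus ?thesis using Splus_eq[OF assms] card_Sp[of n t] card_Box[of "n - 1"] assms(1) by simp
  qed
  show ?thesis using c1 c2 by blast
qed

end
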